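(* Consider Phase-1 training with learning rate $\alpha>0$ on a fixed batch of size $N$, fix $a_\star\in(0,1]$, and let $T_\star := \min\{t : |a_t| \ge a_\star\}$. Let $q_\star := c_0/\sqrt N > 0$. Assume \[ \mathrm{sign}(a_0) = \mathrm{sign}(q_0), \qquad |q_0| \ge q_\star, \] and the stability condition $\alpha a_\star\|\widehat M\|_2 \le \frac12$. Then for all $t < T_\star$ we have $\mathrm{sign}(a_t) = \mathrm{sign}(q_t) = \mathrm{sign}(q_0)$ and $|q_t| \ge |q_0| \ge q_\star$. Consequently, \[ T_\star \le \left\lceil \frac{2(a_\star - |a_0|)_+}{\alpha q_\star}\right\rceil . \]
   Context: $\widehat M := \frac1N\sum_{s=1}^N y^{(s)}x^{(s)}x^{(s)\top}$ for samples $x^{(s)}\in\{\pm1\}^d$, $y^{(s)} = x^{(s)}_1x^{(s)}_2$. Phase-1 updates: $a_{t+1} = \mathrm{clip}_{[-1,1]}(a_t + \frac\alpha2 q_t)$, $w_{t+1} = \frac{w_t + \alpha a_t\widehat M w_t}{\|w_t + \alpha a_t\widehat M w_t\|_2}$, $q_t := w_t^\top\widehat M w_t$, with $w_0$ a unit vector. $c_0>0$ is a constant (in the paper, $c_0\in(0,\sqrt3/2)$ from the lower bound $\Pr[|q_0|\ge c_0/\sqrt N]\ge p_{PZ}(c_0)$). $(z)_+ = \max\{z,0\}$. *)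

theory Defs
  imports "HOL-Analysis.Analysis"
begin

definition clip :: "real \<Rightarrow> real \<Rightarrow> real \<Rightarrow> real" where
  "clip lo hi z = max lo (min hi z)"

definition pos_part :: "real \<Rightarrow> real" where
  "pos_part z = max z 0"

definition Mhat :: "nat \<Rightarrow> (nat \<Rightarrow> real^'d) \<Rightarrow> 'd \<Rightarrow> 'd \<Rightarrow> real^'d^'d" where
  "Mhat N x i1 i2 = (\<chi> i j. (1 / real N) *
      (\<Sum>s<N. (x s $ i1 * x s $ i2) * (x s $ i * x s $ j)))"

definition spec_norm :: "real^'n^'m \<Rightarrow> real" where
  "spec_norm A = onorm (\<lambda>v. A *v v)"

end

theory Submission imports Defs begin

lemma sym_inner:
  fixes M :: "real^'n^'n"
  assumes "\<And>i j. M $ i $ j = M $ j $ i"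
  shows "x \<bullet> (M *v y) = (M *v x) \<bullet> y"
proof -
  have "x \<bullet> (M *v y) = (\<Sum>i\<in>UNIV. \<Sum>j\<in>UNIV. x $ i * M $ i $ j * y $ j)"
    by (simp add: inner_vec_def matrix_vector_mult_def sum_distrib_left mult.assoc)
  also have "\<dots> = (\<Sum>j\<in>UNIV. \<Sum>i\<in>UNIV. x $ i * M $ i $ j * y $ j)"
    by (rule sum.swap)
  also have "\<dots> = (M *v x) \<bullet> y"
    by (simp add: inner_vec_def matrix_vector_mult_def sum_distrib_right assms mult.commute mult.left_commute
        sum_distrib_left)
  finally show ?thesis .
qed

lemma key:
  fixes M :: "real^'n^'n" and w :: "real^'n"
  assumes sym: "\<And>x y. x \<bullet> (M *v y) = (M *v x) \<bullet> y"
    and K: "\<And>x. norm (M *v x) \<le> K * norm x"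
    and w1: "norm w = 1"
    and bK: "\<bar>\<beta>\<bar> * K \<le> 1/2"
  defines "v \<equiv> w + \<beta> *\<^sub>R (M *v w)"
  defines "q \<equiv> w \<bullet> (M *v w)"
  shows "norm v \<ge> 1/2" "\<exists>S\<ge>0. v \<bullet> (M *v v) - q * (v \<bullet> v) = \<beta> * S"
proof -
  define p where "p = M *v w"
  define r where "r = M *v p"
  have Kn: "K \<ge> 0" using K[of w] w1 by (metis mult.right_neutral norm_ge_zero order_trans)
  have np: "norm p \<le> K" using K[of w] w1 p_def by simp
  have "norm v \<ge> norm w - norm (\<beta> *\<^sub>R p)" unfolding v_def p_def[symmetric]
    by (metis add_diff_cancel norm_triangle_ineq4 diff_le_eq add.commute)
  moreover have "norm (\<beta> *\<^sub>R p) \<le> 1/2"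
  proof -
    have "norm (\<beta> *\<^sub>R p) = \<bar>\<beta>\<bar> * norm p" by simp
    also have "\<dots> \<le> \<bar>\<beta>\<bar> * K" using np by (simp add: mult_left_mono)
    finally show ?thesis using bK by linarith
  qed
  ultimately show "norm v \<ge> 1/2" using w1 by linarith
  define u where "u = p - q *\<^sub>R w"
  have ww: "w \<bullet> w = 1" using w1 by (simp add: dot_square_norm)
  have wr: "w \<bullet> r = p \<bullet> p" unfolding r_def p_def using sym by simp
  have pw: "p \<bullet> w = q" unfolding q_def p_def by (simp add: inner_commute)
  have rp: "r \<bullet> p = p \<bullet> r" by (simp add: inner_commute)
  have rw: "r \<bullet> w = p \<bullet> p" using wr by (simp add: inner_commute)
  have Mv: "M *v v = p + \<beta> *\<^sub>R r" unfolding v_def p_def r_def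
    by (simp add: matrix_vector_right_distrib matrix_vector_mult_scaleR)
  have Mu: "M *v u = r - q *\<^sub>R p" unfolding u_def r_def p_def
    by (simp add: matrix_vector_right_distrib matrix_vector_mult_scaleR matrix_vector_mult_diff_distrib)
  define S where "S = (2 + \<beta> * q) * (u \<bullet> u) + \<beta> * (u \<bullet> (M *v u))"
  have uu: "u \<bullet> u = p \<bullet> p - q^2" unfolding u_def
    by (simp add: inner_diff_left inner_diff_right ww pw inner_commute[of w p] power2_eq_square)
  have uMu: "u \<bullet> (M *v u) = p \<bullet> r - 2 * q * (p \<bullet> p) + q^3" unfolding Mu u_def
    by (simp add: inner_diff_left inner_diff_right ww pw rw wr inner_commute[of w p] power3_eq_cube algebra_simps
      flip: p_def r_def q_def)
  have vMv: "v \<bullet> (M *v v) = q + 2 * \<beta> * (p \<bullet> p) + \<beta>^2 * (p \<bullet> r)"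
    unfolding Mv v_def p_def[symmetric]
    by (simp add: inner_add_left inner_add_right q_def p_def[symmetric] wr pw power2_eq_square algebra_simps flip: r_def)
  have vv: "v \<bullet> v = 1 + 2 * \<beta> * q + \<beta>^2 * (p \<bullet> p)"
    unfolding v_def p_def[symmetric]
    by (simp add: inner_add_left inner_add_right ww pw inner_commute[of w p] power2_eq_square algebra_simps)
  have eq: "v \<bullet> (M *v v) - q * (v \<bullet> v) = \<beta> * S"
    unfolding vMv vv S_def uu uMu by (simp add: power2_eq_square power3_eq_cube algebra_simps)
  have "\<bar>q\<bar> \<le> K" unfolding q_def
    using Cauchy_Schwarz_ineq2[of w "M *v w"] w1 np p_def by simp
  hence bq: "\<bar>\<beta> * q\<bar> \<le> 1/2" using bK
    by (metis abs_ge_zero abs_mult mult_left_mono order_trans)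
  have "\<bar>u \<bullet> (M *v u)\<bar> \<le> norm u * norm (M *v u)" by (rule Cauchy_Schwarz_ineq2)
  also have "\<dots> \<le> norm u * (K * norm u)" by (simp add: K mult_left_mono)
  finally have "\<bar>\<beta> * (u \<bullet> (M *v u))\<bar> \<le> \<bar>\<beta>\<bar> * K * (norm u)^2"
    by (simp add: abs_mult power2_eq_square)
      (metis abs_ge_zero mult.assoc mult.left_commute mult_left_mono)
  also have "\<dots> \<le> 1/2 * (norm u)^2" using bK by (intro mult_right_mono) auto
  finally have b2: "\<bar>\<beta> * (u \<bullet> (M *v u))\<bar> \<le> 1/2 * (u \<bullet> u)" by (simp add: dot_square_norm)
  have "(2 + \<beta> * q) * (u \<bullet> u) \<ge> 3/2 * (u \<bullet> u)"
    using bq by (intro mult_right_mono) auto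
  hence "S \<ge> 0" unfolding S_def using b2 by linarith
  thus "\<exists>S\<ge>0. v \<bullet> (M *v v) - q * (v \<bullet> v) = \<beta> * S" using eq by blast
qed
lemma clip_sgn:
  assumes "\<sigma> = 1 \<or> \<sigma> = -1" "\<sigma> * z > 0"
  shows "\<sigma> * clip (-1) 1 z = min 1 (\<sigma> * z)"
  using assms by (auto simp: clip_def min_def max_def)

theorem lemma7:
  fixes N :: nat and x :: "nat \<Rightarrow> real^'d" and i1 i2 :: 'd
    and \<alpha> astar c0 :: real and a :: "nat \<Rightarrow> real" and w :: "nat \<Rightarrow> real^'d"
  defines "M \<equiv> Mhat N x i1 i2"
  defines "q \<equiv> (\<lambda>t. w t \<bullet> (M *v w t))"
  defines "qstar \<equiv> c0 / sqrt (real N)"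
  assumes N_pos: "N \<ge> 1"
    and idx: "i1 \<noteq> i2"
    and samples: "\<And>s k. s < N \<Longrightarrow> x s $ k = 1 \<or> x s $ k = -1"
    and alpha_pos: "\<alpha> > 0"
    and astar: "0 < astar" "astar \<le> 1"
    and c0_pos: "c0 > 0"
    and w0: "norm (w 0) = 1"
    and a_step: "\<And>t. a (Suc t) = clip (-1) 1 (a t + \<alpha> / 2 * q t)"
    and w_step: "\<And>t. w (Suc t) = (w t + (\<alpha> * a t) *\<^sub>R (M *v w t)) /\<^sub>R
                                    norm (w t + (\<alpha> * a t) *\<^sub>R (M *v w t))"
    and sign0: "sgn (a 0) = sgn (q 0)"
    and q0: "\<bar>q 0\<bar> \<ge> qstar"
    and stab: "\<alpha> * astar * spec_norm M \<le> 1 / 2"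
  shows "(\<exists>t. astar \<le> \<bar>a t\<bar>)
    \<and> (\<forall>t < (LEAST t. astar \<le> \<bar>a t\<bar>).
          sgn (a t) = sgn (q t) \<and> sgn (q t) = sgn (q 0) \<and> \<bar>q t\<bar> \<ge> \<bar>q 0\<bar> \<and> \<bar>q 0\<bar> \<ge> qstar)
    \<and> int (LEAST t. astar \<le> \<bar>a t\<bar>)
        \<le> \<lceil>2 * pos_part (astar - \<bar>a 0\<bar>) / (\<alpha> * qstar)\<rceil>"
proof -
  define K where "K = spec_norm M"
  have symM: "\<And>i j. M $ i $ j = M $ j $ i"
    unfolding M_def Mhat_def by (simp add: mult.commute mult.left_commute)
  have sym: "\<And>u v. u \<bullet> (M *v v) = (M *v u) \<bullet> v" by (rule sym_inner[OF symM])
  have Kb: "\<And>u. norm (M *v u) \<le> K * norm u"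
    unfolding K_def spec_norm_def by (rule onorm[OF matrix_vector_mul_bounded_linear])
  have K0: "K \<ge> 0" unfolding K_def spec_norm_def by (rule onorm_pos_le[OF matrix_vector_mul_bounded_linear])
  have qs0: "qstar > 0" unfolding qstar_def using c0_pos N_pos by simp
  have q0ne: "q 0 \<noteq> 0" using q0 qs0 by linarith
  define \<sigma> where "\<sigma> = sgn (q 0)"
  have sig: "\<sigma> = 1 \<or> \<sigma> = -1" unfolding \<sigma>_def using q0ne by (auto simp: sgn_real_def)
  have sq0: "\<sigma> * q 0 = \<bar>q 0\<bar>" unfolding \<sigma>_def by (simp add: sgn_mult_self_eq abs_real_def sgn_real_def)
  have sa0: "\<sigma> * a 0 = \<bar>a 0\<bar>" "a 0 \<noteq> 0" using sign0 q0ne unfolding \<sigma>_def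
    by (auto simp: abs_real_def sgn_real_def split: if_splits)
  define g where "g = \<alpha> * \<bar>q 0\<bar> / 2"
  have g0: "g > 0" unfolding g_def using alpha_pos q0ne by simp
  have step: "norm (w (Suc t)) = 1 \<and> \<sigma> * q (Suc t) \<ge> \<sigma> * q t"
    if wt: "norm (w t) = 1" and at: "\<sigma> * a t > 0" "\<bar>a t\<bar> < astar" for t
  proof -
    define \<beta> where "\<beta> = \<alpha> * a t"
    define v where "v = w t + \<beta> *\<^sub>R (M *v w t)"
    have "\<bar>\<beta>\<bar> * K \<le> \<alpha> * astar * K" unfolding \<beta>_def using at alpha_pos K0
      by (simp add: abs_mult mult_right_mono)
    hence bK: "\<bar>\<beta>\<bar> * K \<le> 1/2" using stab K_def by simp
    have nv: "norm v \<ge> 1/2" unfolding v_def by (rule key(1)[OF sym Kb wt bK])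
    obtain S where S: "S \<ge> 0" "v \<bullet> (M *v v) - q t * (v \<bullet> v) = \<beta> * S"
      using key(2)[OF sym Kb wt bK] unfolding v_def q_def by auto
    have wS: "w (Suc t) = v /\<^sub>R norm v" unfolding v_def \<beta>_def w_step ..
    have nvp: "norm v > 0" using nv by linarith
    have "norm (w (Suc t)) = 1" unfolding wS using nvp by simp
    moreover have "q (Suc t) = v \<bullet> (M *v v) / (norm v)^2"
      unfolding q_def wS using nvp
      by (simp add: matrix_vector_mult_scaleR power2_eq_square field_simps)
    hence "q (Suc t) - q t = \<beta> * S / (norm v)^2"
      using S(2) nvp by (simp add: dot_square_norm field_simps)
    hence "\<sigma> * q (Suc t) - \<sigma> * q t = \<alpha> * (\<sigma> * a t) * S / (norm v)^2"
      unfolding \<beta>_def by (simp add: algebra_simps)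
    moreover have "\<alpha> * (\<sigma> * a t) * S / (norm v)^2 \<ge> 0"
      using alpha_pos at S by simp
    ultimately show ?thesis by linarith
  qed
  have inv: "(\<forall>s<t. \<bar>a s\<bar> < astar) \<longrightarrow> norm (w t) = 1 \<and> \<sigma> * a t > 0 \<and> \<sigma> * q t \<ge> \<bar>q 0\<bar>
      \<and> \<sigma> * a t \<ge> min 1 (\<bar>a 0\<bar> + t * g)" for t
  proof (induction t)
    case 0
    then show ?case using w0 sq0 sa0 by auto
  next
    case (Suc t)
    show ?case
    proof
      assume h: "\<forall>s<Suc t. \<bar>a s\<bar> < astar"
      hence IH: "norm (w t) = 1 \<and> \<sigma> * a t > 0 \<and> \<sigma> * q t \<ge> \<bar>q 0\<bar> \<and> \<sigma> * a t \<ge> min 1 (\<bar>a 0\<bar> + t * g)"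
        using Suc by auto
      have st: "norm (w (Suc t)) = 1 \<and> \<sigma> * q (Suc t) \<ge> \<sigma> * q t"
        using step IH h by auto
      define z where "z = a t + \<alpha> / 2 * q t"
      have sz: "\<sigma> * z \<ge> \<sigma> * a t + g" unfolding z_def g_def using IH alpha_pos
        by (simp add: algebra_simps)
      have "\<sigma> * a (Suc t) = min 1 (\<sigma> * z)" unfolding a_step z_def[symmetric]
        using clip_sgn[OF sig, of z] sz IH g0 by linarith
      then show "norm (w (Suc t)) = 1 \<and> \<sigma> * a (Suc t) > 0 \<and> \<sigma> * q (Suc t) \<ge> \<bar>q 0\<bar>
          \<and> \<sigma> * a (Suc t) \<ge> min 1 (\<bar>a 0\<bar> + (Suc t) * g)"
        using st IH sz g0 by (auto simp: min_def algebra_simps split: if_splits)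
    qed
  qed
  have absa: "\<bar>a t\<bar> = \<sigma> * a t" if "\<sigma> * a t > 0" for t
    using sig that by (auto simp: abs_real_def)
  have absq: "\<bar>q t\<bar> = \<sigma> * q t" if "\<sigma> * q t > 0" for t
    using sig that by (auto simp: abs_real_def)
  define B where "B = \<lceil>2 * pos_part (astar - \<bar>a 0\<bar>) / (\<alpha> * qstar)\<rceil>"
  have "2 * pos_part (astar - \<bar>a 0\<bar>) / (\<alpha> * qstar) \<ge> 0"
    unfolding pos_part_def using alpha_pos qs0 by simp
  hence B0: "B \<ge> 0" unfolding B_def by simp
  have ex: "\<exists>t \<le> nat B. astar \<le> \<bar>a t\<bar>"
  proof (rule ccontr)
    assume "\<not> ?thesis"
    hence h: "\<forall>s<nat B. \<bar>a s\<bar> < astar" "\<bar>a (nat B)\<bar> < astar" by (meson less_imp_le not_le order_refl)+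
    have I: "\<sigma> * a (nat B) > 0" "\<sigma> * a (nat B) \<ge> min 1 (\<bar>a 0\<bar> + (nat B) * g)"
      using inv[of "nat B"] h(1) by auto
    have "real (nat B) \<ge> 2 * pos_part (astar - \<bar>a 0\<bar>) / (\<alpha> * qstar)"
    proof -
      have "real (nat B) = real_of_int B" using B0 by simp
      thus ?thesis unfolding B_def by (metis le_of_int_ceiling)
    qed
    hence "real (nat B) * (\<alpha> * qstar) \<ge> 2 * pos_part (astar - \<bar>a 0\<bar>)"
      using alpha_pos qs0 by (simp add: divide_le_eq)
    moreover have "real (nat B) * (\<alpha> * qstar) \<le> real (nat B) * (\<alpha> * \<bar>q 0\<bar>)"
      using q0 alpha_pos by (intro mult_left_mono) auto
    moreover have "real (nat B) * g = real (nat B) * (\<alpha> * \<bar>q 0\<bar>) / 2" unfolding g_def by simp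
    moreover have "pos_part (astar - \<bar>a 0\<bar>) \<ge> astar - \<bar>a 0\<bar>" unfolding pos_part_def by simp
    ultimately have "\<bar>a 0\<bar> + (nat B) * g \<ge> astar" by linarith
    hence "min 1 (\<bar>a 0\<bar> + (nat B) * g) \<ge> astar" using astar by simp
    hence "\<sigma> * a (nat B) \<ge> astar" using I(2) by linarith
    hence "\<bar>a (nat B)\<bar> \<ge> astar" using absa[OF I(1)] by simp
    thus False using h by linarith
  qed
  define T where "T = (LEAST t. astar \<le> \<bar>a t\<bar>)"
  have TB: "T \<le> nat B" unfolding T_def using ex by (meson Least_le order_trans)
  have below: "\<forall>s<t. \<bar>a s\<bar> < astar" if "t < T" for t
    using that not_less_Least unfolding T_def by (metis not_le order.strict_trans)
  have part2: "sgn (a t) = sgn (q t) \<and> sgn (q t) = sgn (q 0) \<and> \<bar>q t\<bar> \<ge> \<bar>q 0\<bar> \<and> \<bar>q 0\<bar> \<ge> qstar"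
    if "t < T" for t
  proof -
    have I: "\<sigma> * a t > 0" "\<sigma> * q t \<ge> \<bar>q 0\<bar>" using inv[of t] below[OF that] by auto
    have "\<sigma> * q t > 0" using I q0ne by simp
    hence "sgn (q t) = \<sigma>" "sgn (a t) = \<sigma>" using I sig by (auto simp: sgn_real_def)
    moreover have "\<bar>q t\<bar> \<ge> \<bar>q 0\<bar>" using absq \<open>\<sigma> * q t > 0\<close> I by simp
    ultimately show ?thesis using q0 \<sigma>_def by simp
  qed
  have e1: "\<exists>t. astar \<le> \<bar>a t\<bar>" using ex by blast
  have e3: "int T \<le> B" using TB B0 by linarith
  show ?thesis
    using e1 e3 part2 unfolding T_def B_def by blast
qed
end
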